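(* Let $I$ be a $b$-nested common interval of $\mathcal{P}$ with domain $D(I)=\{x_1,\ldots,x_r\}$, where $r\geq 1$. Then for every $i$ with $1\leq i\leq r$, the interval $Int(x_i)$ is either $b$-small or a $b$-nested common interval.
   Context: Let $n\geq 1$, $K\geq 1$ and let $\mathcal{P}=\{P_1,\ldots,P_K\}$ be permutations of $\{1,\ldots,n\}$ with $P_1=(1,2,\ldots,n)$. For integers $i\leq j$ write $(i..j)=\{i,i+1,\ldots,j\}$. A common interval of $\mathcal{P}$ is a set of integers occupying consecutive positions in every $P_k$; all common intervals have the form $(i..j)$, and singletons and $(1..n)$ are common. Fix a positive integer $b$. A common interval $I$ is $b$-small if $|I|\leq b$ and $b$-large otherwise. It is $b$-nested if $|I|=1$ or $I$ strictly contains a $b$-nested common interval $J$ with $|J|\geq |I|-b$ (recursive definition on size). Two intervals $(i..j)$, $(k..l)$ overlap if $i<k\leq j<l$ or $k<i\leq l<j$. A common interval is strong if it overlaps no other common interval. The PQ-tree $T$ of $\mathcal{P}$: its nodes are the strong common intervals ($Int(x)$ denotes the interval of node $x$), the root is $(1..n)$, the leaves are the singletons, and the parent of $y$ is the node $x$ with $Int(x)$ the smallest strong common interval strictly containing $Int(y)$. A node $x$ with children set $D$ is a $P$-node if no union $\bigcup_{z\in D'}Int(z)$ with $D'\subset D$, $2\leq|D'|<|D|$, is a common interval; otherwise it is a $Q$-node, and its children $y_1,\ldots,y_r$ are ordered so that $\max Int(y_i)+1=\min Int(y_{i+1})$. It is known that a set $I$ is a common interval iff either $I=Int(x)$ for a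 node $x$, or there is a unique $Q$-node $z$ such that $I$ is the union of the intervals of a run of consecutive children of $z$. The domain $D(I)$ of a common interval $I$ is: the set of children of $x$ if $I=Int(x)$ is strong; otherwise the set $\{x_l,\ldots,x_r\}$ of consecutive children of the $Q$-node $z$ whose intervals have union $I$. *)

theory Defs
  imports Main
begin

definition perm_family :: "nat \<Rightarrow> nat list list \<Rightarrow> bool" where
  "perm_family n Ps \<longleftrightarrow> n \<ge> 1 \<and> length Ps \<ge> 1 \<and>
     hd Ps = [1..<n+1] \<and> (\<forall>P\<in>set Ps. distinct P \<and> set P = {1..n})"

definition positions :: "nat list \<Rightarrow> nat set \<Rightarrow> nat set" where
  "positions P I = {i. i < length P \<and> P ! i \<in> I}"

definition common :: "nat \<Rightarrow> nat list list \<Rightarrow> nat set \<Rightarrow> bool" where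
  "common n Ps I \<longleftrightarrow> I \<noteq> {} \<and> I \<subseteq> {1..n} \<and>
     (\<forall>P\<in>set Ps. \<exists>a c. positions P I = {a..c})"

definition overlap :: "nat set \<Rightarrow> nat set \<Rightarrow> bool" where
  "overlap I J \<longleftrightarrow>
     (Min I < Min J \<and> Min J \<le> Max I \<and> Max I < Max J) \<or>
     (Min J < Min I \<and> Min I \<le> Max J \<and> Max J < Max I)"

definition strong :: "nat \<Rightarrow> nat list list \<Rightarrow> nat set \<Rightarrow> bool" where
  "strong n Ps I \<longleftrightarrow> common n Ps I \<and> (\<forall>J. common n Ps J \<longrightarrow> \<not> overlap I J)"

text \<open>Nodes of the PQ-tree are identified with their (strong) intervals.
  y is a child of x iff x is the smallest strong interval strictly containing y.\<close>
definition children :: "nat \<Rightarrow> nat list list \<Rightarrow> nat set \<Rightarrow> nat set set" where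
  "children n Ps x = {y. strong n Ps y \<and> y \<subset> x \<and>
      (\<forall>w. strong n Ps w \<and> y \<subset> w \<longrightarrow> x \<subseteq> w)}"

definition P_node :: "nat \<Rightarrow> nat list list \<Rightarrow> nat set \<Rightarrow> bool" where
  "P_node n Ps x \<longleftrightarrow> strong n Ps x \<and>
     (\<forall>D'. D' \<subset> children n Ps x \<and> 2 \<le> card D' \<and> card D' < card (children n Ps x)
        \<longrightarrow> \<not> common n Ps (\<Union>D'))"

definition Q_node :: "nat \<Rightarrow> nat list list \<Rightarrow> nat set \<Rightarrow> bool" where
  "Q_node n Ps x \<longleftrightarrow> strong n Ps x \<and> \<not> P_node n Ps x"

text \<open>D is a run of consecutive children of z (children ordered by position).\<close>
definition consecutive_children :: "nat \<Rightarrow> nat list list \<Rightarrow> nat set \<Rightarrow> nat set set \<Rightarrow> bool" where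
  "consecutive_children n Ps z D \<longleftrightarrow> D \<noteq> {} \<and> D \<subseteq> children n Ps z \<and>
     (\<forall>y1\<in>D. \<forall>y2\<in>D. \<forall>y\<in>children n Ps z.
        Min y1 \<le> Min y \<and> Min y \<le> Min y2 \<longrightarrow> y \<in> D)"

definition domain :: "nat \<Rightarrow> nat list list \<Rightarrow> nat set \<Rightarrow> nat set set" where
  "domain n Ps I = (if strong n Ps I then children n Ps I
     else (THE D. \<exists>z. Q_node n Ps z \<and> consecutive_children n Ps z D \<and> \<Union>D = I))"

inductive nested :: "nat \<Rightarrow> nat list list \<Rightarrow> nat \<Rightarrow> nat set \<Rightarrow> bool" where
  single: "common n Ps I \<Longrightarrow> card I = 1 \<Longrightarrow> nested n Ps b I"
| step: "common n Ps I \<Longrightarrow> nested n Ps b J \<Longrightarrow> J \<subset> I \<Longrightarrow> card I \<le> card J + b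
          \<Longrightarrow> nested n Ps b I"

definition small :: "nat \<Rightarrow> nat set \<Rightarrow> bool" where
  "small b I \<longleftrightarrow> card I \<le> b"

end

theory Submission
  imports Defs
begin

lemma MinI: "(a::nat) \<le> c \<Longrightarrow> Min {a..c} = a" by (intro Min_eqI) auto
lemma MaxI: "(a::nat) \<le> c \<Longrightarrow> Max {a..c} = c" by (intro Max_eqI) auto

lemma pf_len: "perm_family n Ps \<Longrightarrow> P \<in> set Ps \<Longrightarrow> length P = n"
  unfolding perm_family_def by (metis card_atLeastAtMost diff_Suc_1 distinct_card)

lemma common_fin: "common n Ps J \<Longrightarrow> finite J"
  unfolding common_def using finite_subset by blast

lemma common_int:
  assumes pf: "perm_family n Ps" and c: "common n Ps J"
  shows "\<exists>a c. a \<le> c \<and> J = {a..c}"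
proof -
  have h: "hd Ps \<in> set Ps" using pf unfolding perm_family_def by (cases Ps) auto
  then obtain a c where ac: "positions [1..<n+1] J = {a..c}"
    using c pf unfolding common_def perm_family_def by metis
  have sub: "J \<subseteq> {1..n}" "J \<noteq> {}" using c unfolding common_def by auto
  have "J = {Suc a..Suc c}"
  proof
    show "J \<subseteq> {Suc a..Suc c}"
    proof
      fix x assume x: "x \<in> J"
      then have "1 \<le> x" "x \<le> n" using sub by auto
      moreover have "[1..<n+1] ! (x - 1) = x" using \<open>1 \<le> x\<close> \<open>x \<le> n\<close> by (subst nth_upt) auto
      ultimately have "x - 1 \<in> positions [1..<n+1] J" using x unfolding positions_def by auto
      then show "x \<in> {Suc a..Suc c}" using ac \<open>1 \<le> x\<close> by auto
    qed
  next
    show "{Suc a..Suc c} \<subseteq> J"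
    proof
      fix x assume x: "x \<in> {Suc a..Suc c}"
      then have "x - 1 \<in> positions [1..<n+1] J" using ac by auto
      then have p: "x - 1 < length [1..<n+1]" "[1..<n+1] ! (x - 1) \<in> J" unfolding positions_def by blast+
      have "x - 1 < n" using p(1) by (simp only: length_upt)
      moreover have "[1..<n+1] ! (x - 1) = x" using x \<open>x - 1 < n\<close> by (subst nth_upt) auto
      ultimately show "x \<in> J" using p(2) by metis
    qed
  qed
  then show ?thesis using sub by (metis atLeastatMost_empty_iff)
qed

lemma int_cmp:
  assumes "(a::nat) \<le> c" "p \<le> q" "\<not> overlap {a..c} {p..q}" "{a..c} \<inter> {p..q} \<noteq> {}"
  shows "{a..c} \<subseteq> {p..q} \<or> {p..q} \<subseteq> {a..c}"
  using assms unfolding overlap_def MinI[OF assms(1)] MaxI[OF assms(1)] MinI[OF assms(2)] MaxI[OF assms(2)]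
  by auto

lemma cmp:
  assumes pf: "perm_family n Ps" and s: "strong n Ps x" and c: "common n Ps J" and i: "x \<inter> J \<noteq> {}"
  shows "x \<subseteq> J \<or> J \<subseteq> x"
proof -
  obtain a c where 1: "a \<le> c" "x = {a..c}" using common_int[OF pf] s unfolding strong_def by blast
  obtain p q where 2: "p \<le> q" "J = {p..q}" using common_int[OF pf c] by blast
  have "\<not> overlap x J" using s c unfolding strong_def by blast
  then show ?thesis using int_cmp[of a c p q] 1 2 i by auto
qed

lemma nested_common: "nested n Ps b J \<Longrightarrow> common n Ps J"
  by (induction rule: nested.induct) auto

lemma key:
  shows "nested n Ps b J \<Longrightarrow> perm_family n Ps \<Longrightarrow> b > 0 \<Longrightarrow> strong n Ps x \<Longrightarrow> x \<subseteq> J \<Longrightarrow> card x > b \<Longrightarrow> nested n Ps b x"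
proof (induction rule: nested.induct)
  case (single n Ps I b)
  have "finite I" using single(1) common_fin by blast
  then have "card x \<le> 1" using single(2) card_mono[OF _ single(6)] by simp
  then show ?case using single(4,7) by simp
next
  case (step n Ps I b J)
  have cx: "common n Ps x" using step(8) unfolding strong_def by blast
  show ?case
  proof (cases "x \<subseteq> J")
    case True show ?thesis by (rule step(5)[OF step(6,7,8) True step(10)])
  next
    case False
    have fI: "finite I" using step(1) common_fin by blast
    show ?thesis
    proof (cases "x \<inter> J = {}")
      case True
      have "J \<subseteq> I - x" using True step(3) by blast
      then have "card J \<le> card (I - x)" using fI by (intro card_mono) auto
      also have "card (I - x) = card I - card x" using fI step(9) by (intro card_Diff_subset) (rule finite_subset)
      finally have "card J \<le> card I - card x" .
      moreover have "card x \<le> card I" using fI step(9) by (intro card_mono) auto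
      ultimately show ?thesis using step(4,10) by linarith
    next
      case False
      have "x \<subseteq> J \<or> J \<subseteq> x" using cmp[OF step(6) step(8) nested_common[OF step(2)]] False by blast
      then have jx: "J \<subset> x" using \<open>\<not> x \<subseteq> J\<close> by blast
      moreover have "card x \<le> card I" using fI step(9) by (intro card_mono) auto
      ultimately show ?thesis by (intro nested.step[OF cx step(2) jx]) (use step(4) in linarith)
    qed
  qed
qed

lemma strong_common: "strong n Ps x \<Longrightarrow> common n Ps x" unfolding strong_def by blast

lemma common_sub: "common n Ps x \<Longrightarrow> x \<subseteq> {1..n}" unfolding common_def by blast
lemma common_ne: "common n Ps x \<Longrightarrow> x \<noteq> {}" unfolding common_def by blast

lemma child: "y \<in> children n Ps z \<Longrightarrow> strong n Ps y \<and> y \<subset> z" unfolding children_def by blast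

lemma children_disj:
  assumes pf: "perm_family n Ps" and y: "y \<in> children n Ps z" and y': "y' \<in> children n Ps z"
    and i: "y \<inter> y' \<noteq> {}"
  shows "y = y'"
proof (rule ccontr)
  assume ne: "y \<noteq> y'"
  have c: "y \<subseteq> y' \<or> y' \<subseteq> y" using cmp[OF pf child[OF y, THEN conjunct1] strong_common[OF child[OF y', THEN conjunct1]] i] .
  show False
  proof (cases "y \<subseteq> y'")
    case True
    then have "y \<subset> y'" using ne by blast
    then have "z \<subseteq> y'" using y child[OF y'] unfolding children_def by blast
    then show False using child[OF y'] by blast
  next
    case False
    then have "y' \<subset> y" using ne c by blast
    then have "z \<subseteq> y" using y' child[OF y] unfolding children_def by blast
    then show False using child[OF y] by blast
  qed
qed

lemma no_overlap_single:
  assumes "common n Ps J" shows "\<not> overlap {e} J"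
  unfolding overlap_def by auto

lemma single_strong:
  assumes pf: "perm_family n Ps" and e: "e \<in> {1..n}"
  shows "strong n Ps {e}"
proof -
  have "common n Ps {e}" unfolding common_def
  proof (intro conjI ballI)
    show "{e} \<noteq> {}" "{e} \<subseteq> {1..n}" using e by auto
    fix P assume P: "P \<in> set Ps"
    then have d: "distinct P" and sP: "set P = {1..n}" using pf unfolding perm_family_def by auto
    then obtain i where i: "i < length P" "P ! i = e" using e by (metis in_set_conv_nth)
    have "positions P {e} = {i..i}"
      unfolding positions_def using i d nth_eq_iff_index_eq by fastforce
    then show "\<exists>a c. positions P {e} = {a..c}" by blast
  qed
  then show ?thesis unfolding strong_def using no_overlap_single by blast
qed

lemma univ_strong:
  assumes pf: "perm_family n Ps"
  shows "strong n Ps {1..n}"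
proof -
  have n1: "n \<ge> 1" using pf unfolding perm_family_def by blast
  have "common n Ps {1..n}" unfolding common_def
  proof (intro conjI ballI)
    show "{1..n} \<noteq> {}" "{1..n} \<subseteq> {1..n}" using n1 by auto
    fix P assume P: "P \<in> set Ps"
    then have sP: "set P = {1..n}" using pf unfolding perm_family_def by auto
    have l: "length P = n" using pf_len[OF pf P] .
    have "positions P {1..n} = {0..n-1}"
      unfolding positions_def using l sP n1 nth_mem by fastforce
    then show "\<exists>a c. positions P {1..n} = {a..c}" by blast
  qed
  moreover have "\<not> overlap {1..n} J" if J: "common n Ps J" for J
  proof -
    have f: "finite J" "J \<noteq> {}" "J \<subseteq> {1..n}" using J common_fin common_ne common_sub by auto
    have "Min J \<in> J" "Max J \<in> J" using f by auto
    then have "1 \<le> Min J" "Max J \<le> n" using f by auto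
    then show ?thesis unfolding overlap_def MinI[OF n1] MaxI[OF n1] by auto
  qed
  ultimately show ?thesis unfolding strong_def by blast
qed

lemma finite_children: "finite (children n Ps z)"
proof -
  have "children n Ps z \<subseteq> Pow {1..n}"
    unfolding children_def strong_def common_def by auto
  then show ?thesis by (rule finite_subset) simp
qed

lemma exist:
  assumes pf: "perm_family n Ps" and cI: "common n Ps I" and ns: "\<not> strong n Ps I"
  shows "\<exists>z D. Q_node n Ps z \<and> consecutive_children n Ps z D \<and> \<Union>D = I"
proof -
  have Ine: "I \<noteq> {}" and Isub: "I \<subseteq> {1..n}" using cI common_ne common_sub by auto
  obtain z where z: "strong n Ps z \<and> I \<subseteq> z" and zm: "\<forall>w. strong n Ps w \<and> I \<subseteq> w \<longrightarrow> card z \<le> card w"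
    using ex_has_least_nat[of "\<lambda>w. strong n Ps w \<and> I \<subseteq> w" "{1..n}" card] univ_strong[OF pf] Isub by blast
  have fz: "finite z" using z strong_common common_fin by blast
  have zmin: "z \<subseteq> w" if w: "strong n Ps w" "I \<subseteq> w" for w
  proof -
    have zw: "z \<inter> w \<noteq> {}" using z w(2) Ine by blast
    have "z \<subseteq> w \<or> w \<subseteq> z" using cmp[OF pf conjunct1[OF z] strong_common[OF w(1)] zw] .
    moreover have "\<not> w \<subset> z"
    proof
      assume "w \<subset> z"
      then have "card w < card z" using psubset_card_mono[OF fz] by blast
      moreover have "card z \<le> card w" using zm w by blast
      ultimately show False by linarith
    qed
    ultimately show ?thesis by blast
  qed
  have zI: "z \<noteq> I" using z ns by blast
  have cover: "\<exists>y\<in>children n Ps z. e \<in> y" if e: "e \<in> z" for e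
  proof -
    have ez: "e \<in> {1..n}" using e z strong_common common_sub by blast
    have "{e} \<subset> z"
    proof -
      have "z \<noteq> {e}" using zI z Ine by blast
      then show ?thesis using e by blast
    qed
    then obtain y where y: "strong n Ps y \<and> y \<subset> z \<and> e \<in> y"
      and ym: "\<forall>w. strong n Ps w \<and> w \<subset> z \<and> e \<in> w \<longrightarrow> n - card y \<le> n - card w"
      using ex_has_least_nat[of "\<lambda>w. strong n Ps w \<and> w \<subset> z \<and> e \<in> w" "{e}" "\<lambda>w. n - card w"]
        single_strong[OF pf ez] by blast
    have "y \<in> children n Ps z" unfolding children_def
    proof (intro CollectI conjI allI impI)
      show "strong n Ps y" "y \<subset> z" using y by auto
      fix w assume w: "strong n Ps w \<and> y \<subset> w"
      have zw: "z \<inter> w \<noteq> {}" using w y by blast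
      have "z \<subseteq> w \<or> w \<subseteq> z" using cmp[OF pf conjunct1[OF z] strong_common zw] w by blast
      moreover have False if wz: "w \<subset> z"
      proof -
        have fw: "finite w" using w strong_common common_fin by blast
        have "w \<subseteq> {1..n}" using w strong_common common_sub by blast
        then have "card w \<le> card {1..n}" by (intro card_mono) auto
        then have "card w \<le> n" by simp
        moreover have "card y < card w" using psubset_card_mono[OF fw] w by blast
        moreover have "n - card y \<le> n - card w" using ym w wz y by auto
        ultimately show False by linarith
      qed
      ultimately show "z \<subseteq> w" by blast
    qed
    then show ?thesis using y by blast
  qed
  define D where "D = {y \<in> children n Ps z. y \<inter> I \<noteq> {}}"
  have DI: "y \<subseteq> I" if y: "y \<in> D" for y
  proof -
    have yc: "y \<in> children n Ps z" and yi: "y \<inter> I \<noteq> {}" using y unfolding D_def by auto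
    have "y \<subseteq> I \<or> I \<subseteq> y" using cmp[OF pf conjunct1[OF child[OF yc]] cI yi] .
    moreover have "\<not> I \<subseteq> y"
    proof
      assume "I \<subseteq> y"
      then have "z \<subseteq> y" using zmin conjunct1[OF child[OF yc]] by blast
      then show False using child[OF yc] by blast
    qed
    ultimately show ?thesis by blast
  qed
  have UD: "\<Union>D = I"
  proof
    show "\<Union>D \<subseteq> I" using DI by blast
    show "I \<subseteq> \<Union>D"
    proof
      fix e assume e: "e \<in> I"
      then obtain y where "y \<in> children n Ps z" "e \<in> y" using cover z by blast
      then show "e \<in> \<Union>D" using e unfolding D_def by blast
    qed
  qed
  obtain a c where ac: "a \<le> c" "I = {a..c}" using common_int[OF pf cI] by blast
  have Dne: "D \<noteq> {}" using UD Ine by blast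
  have cc: "consecutive_children n Ps z D" unfolding consecutive_children_def
  proof (intro conjI ballI impI)
    show "D \<noteq> {}" by (rule Dne)
    show "D \<subseteq> children n Ps z" unfolding D_def by blast
    fix y1 y2 y assume y1: "y1 \<in> D" and y2: "y2 \<in> D" and y: "y \<in> children n Ps z"
      and m: "Min y1 \<le> Min y \<and> Min y \<le> Min y2"
    have fy: "\<And>u. u \<in> children n Ps z \<Longrightarrow> finite u \<and> u \<noteq> {}"
      using child strong_common common_fin common_ne by blast
    have "Min y1 \<in> y1" "Min y2 \<in> y2" using fy y1 y2 unfolding D_def by auto
    then have "Min y1 \<in> I" "Min y2 \<in> I" using DI y1 y2 by auto
    then have "Min y \<in> I" using m ac by auto
    moreover have "Min y \<in> y" using fy[OF y] by auto
    ultimately show "y \<in> D" using y unfolding D_def by blast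
  qed
  have Dsub: "D \<subseteq> children n Ps z" unfolding D_def by blast
  have Dneq: "D \<noteq> children n Ps z"
  proof
    assume "D = children n Ps z"
    then have "z \<subseteq> I" using cover UD by blast
    then show False using zI z by blast
  qed
  have fD: "finite D" using finite_subset[OF Dsub finite_children] .
  have c2: "2 \<le> card D"
  proof (rule ccontr)
    assume "\<not> 2 \<le> card D"
    moreover have "card D \<noteq> 0" using fD Dne by simp
    ultimately have "card D = 1" by linarith
    then obtain y where "D = {y}" by (rule card_1_singletonE)
    then have "I = y" "y \<in> children n Ps z" using UD Dsub by auto
    then show False using ns child by blast
  qed
  have cl: "card D < card (children n Ps z)"
    using psubset_card_mono[OF finite_children] Dsub Dneq by blast
  have "Q_node n Ps z" unfolding Q_node_def P_node_def
    using z Dsub Dneq c2 cl UD cI by blast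
  then show ?thesis using cc UD by blast
qed

lemma zsub:
  assumes pf: "perm_family n Ps" and ns: "\<not> strong n Ps I" and cI: "common n Ps I"
    and q1: "Q_node n Ps z1" "consecutive_children n Ps z1 D1" "\<Union>D1 = I"
    and q2: "Q_node n Ps z2" "consecutive_children n Ps z2 D2" "\<Union>D2 = I"
  shows "z1 \<subseteq> z2"
proof (rule ccontr)
  assume nz: "\<not> z1 \<subseteq> z2"
  have s1: "strong n Ps z1" and s2: "strong n Ps z2" using q1 q2 unfolding Q_node_def by auto
  have I1: "I \<subseteq> z1" using q1 child unfolding consecutive_children_def by blast
  have I2: "I \<subseteq> z2" using q2 child unfolding consecutive_children_def by blast
  have Ine: "I \<noteq> {}" using cI common_ne by blast
  have "z1 \<subseteq> z2 \<or> z2 \<subseteq> z1" using cmp[OF pf s1 strong_common[OF s2]] I1 I2 Ine by blast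
  then have z21: "z2 \<subset> z1" using nz by blast
  obtain y where y: "y \<in> D1" using q1 unfolding consecutive_children_def by blast
  have yc: "y \<in> children n Ps z1" using y q1 unfolding consecutive_children_def by blast
  have yI: "y \<subseteq> I" using y q1 by blast
  show False
  proof (cases "y = z2")
    case True
    then have "I = z2" using yI I2 by blast
    then show False using ns s2 by blast
  next
    case False
    then have "y \<subset> z2" using yI I2 by blast
    then have "z1 \<subseteq> z2" using yc s2 unfolding children_def by blast
    then show False using nz by blast
  qed
qed

lemma Dsub:
  assumes pf: "perm_family n Ps"
    and q1: "consecutive_children n Ps z D1" "\<Union>D1 = I"
    and q2: "consecutive_children n Ps z D2" "\<Union>D2 = I"
  shows "D1 \<subseteq> D2"
proof
  fix y assume y: "y \<in> D1"
  have yc: "y \<in> children n Ps z" using y q1 unfolding consecutive_children_def by blast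
  then have "y \<noteq> {}" using child strong_common common_ne by blast
  then obtain e where e: "e \<in> y" by blast
  then have "e \<in> \<Union>D2" using y q1 q2 by blast
  then obtain y' where y': "y' \<in> D2" "e \<in> y'" by blast
  have "y' \<in> children n Ps z" using y' q2 unfolding consecutive_children_def by blast
  then have "y = y'" using children_disj[OF pf yc] e y' by blast
  then show "y \<in> D2" using y' by blast
qed

lemma domain_prop:
  assumes pf: "perm_family n Ps" and cI: "common n Ps I" and x: "x \<in> domain n Ps I"
  shows "strong n Ps x \<and> x \<subseteq> I"
proof (cases "strong n Ps I")
  case True
  then have "x \<in> children n Ps I" using x unfolding domain_def by simp
  then show ?thesis using child by blast
next
  case False
  let ?P = "\<lambda>D. \<exists>z. Q_node n Ps z \<and> consecutive_children n Ps z D \<and> \<Union>D = I"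
  obtain z0 D0 where 0: "Q_node n Ps z0" "consecutive_children n Ps z0 D0" "\<Union>D0 = I"
    using exist[OF pf cI False] by blast
  have uniq: "D = D0" if PD: "?P D" for D
  proof -
    obtain z where z: "Q_node n Ps z" "consecutive_children n Ps z D" "\<Union>D = I" using PD by blast
    have "z = z0" using zsub[OF pf False cI z 0] zsub[OF pf False cI 0 z] by (rule equalityI)
    then have "D \<subseteq> D0" "D0 \<subseteq> D" using Dsub[OF pf z(2,3)] Dsub[OF pf 0(2,3)] z 0 by simp_all
    then show ?thesis by (rule equalityI)
  qed
  have "(THE D. ?P D) = D0"
  proof (rule the_equality)
    show "?P D0" using 0 by blast
    show "\<And>D. ?P D \<Longrightarrow> D = D0" by (rule uniq)
  qed
  have dom: "domain n Ps I = (THE D. ?P D)" unfolding domain_def by (rule if_not_P[OF False])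
  have xD: "x \<in> D0" using x unfolding dom \<open>(THE D. ?P D) = D0\<close> .
  have sub: "D0 \<subseteq> children n Ps z0" using 0(2) unfolding consecutive_children_def by (elim conjE)
  have "x \<in> children n Ps z0" using xD sub by (rule rev_subsetD)
  then have "strong n Ps x" using child by blast
  moreover have "x \<subseteq> I" using xD 0(3) by blast
  ultimately show ?thesis by blast
qed

theorem lemma1:
  fixes n b :: nat and Ps :: "nat list list" and I :: "nat set"
  assumes "perm_family n Ps"
    and "b > 0"
    and "nested n Ps b I"
    and "domain n Ps I \<noteq> {}"
  shows "\<forall>x\<in>domain n Ps I. small b x \<or> nested n Ps b x"
proof
  fix x assume x: "x \<in> domain n Ps I"
  have d: "strong n Ps x \<and> x \<subseteq> I" using domain_prop[OF assms(1) nested_common[OF assms(3)] x] .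
  show "small b x \<or> nested n Ps b x"
  proof (cases "card x \<le> b")
    case True then show ?thesis unfolding small_def by blast
  next
    case False
    then show ?thesis using key[OF assms(3) assms(1) assms(2) conjunct1[OF d] conjunct2[OF d]] by simp
  qed
qed

end
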